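(* Let $(X,\mu)$ be a non-atomic probability measure space, $\mathcal{T}$ a tree on $X$, $\mathcal{M}=\mathcal{M}_{\mathcal{T}}$ the associated maximal operator, and $p>1$. For $0<f\le F$ and $\lambda>0$ define $$B(f,F,\lambda)=\sup\Big\{\mu(\{x:\mathcal{M}\phi(x)\ge\lambda\}) : \phi\ge 0 \text{ measurable},\ \int_X\phi\,d\mu=f,\ |||\phi|||_{p,\infty}\le F\Big\}.$$ Then $B(f,F,\lambda)=\min(1,f/\lambda,F^p/\lambda^p)$; that is, $B=1$ for $0<\lambda\le f$, $B=f/\lambda$ for $f<\lambda\le (F^p/f)^{1/(p-1)}$, and $B=F^p/\lambda^p$ for $\lambda>(F^p/f)^{1/(p-1)}$.
   Context: Two measurable sets $A,B$ are almost disjoint if $\mu(A\cap B)=0$. A tree on $(X,\mu)$ is a set $\mathcal{T}$ of measurable subsets of $X$ such that: (i) $X\in\mathcal{T}$ and $\mu(I)>0$ for every $I\in\mathcal{T}$; (ii) every $I\in\mathcal{T}$ has an associated finite subset $\mathcal{C}(I)\subseteq\mathcal{T}$ with at least two elements, whose elements are pairwise almost disjoint subsets of $I$ with union $I$; (iii) $\mathcal{T}=\bigcup_{m\ge0}\mathcal{T}_{(m)}$ where $\mathcal{T}_{(0)}=\{X\}$ and $\mathcal{T}_{(m+1)}=\bigcup_{I\in\mathcal{T}_{(m)}}\mathcal{C}(I)$; (iv) $\lim_{m\to\infty}\sup_{I\in\mathcal{T}_{(m)}}\mu(I)=0$. The associated maximal operator is, for $\phi\in L^1(X,\mu)$, $\mathcal{M}_{\mathcal{T}}\phi(x)=\sup\{\frac{1}{\mu(I)}\int_I|\phi|\,d\mu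 : x\in I\in\mathcal{T}\}$. For measurable $\phi$, $|||\phi|||_{p,\infty}=\sup\{\mu(E)^{-1+1/p}\int_E|\phi|\,d\mu : E\subseteq X \text{ measurable}, \mu(E)>0\}$. *)

theory Defs
  imports "HOL-Probability.Probability"
begin

definition nonatomic :: "'a measure \<Rightarrow> bool" where
  "nonatomic M \<longleftrightarrow> (\<forall>A\<in>sets M. 0 < emeasure M A \<longrightarrow>
     (\<exists>B\<in>sets M. B \<subseteq> A \<and> 0 < emeasure M B \<and> emeasure M B < emeasure M A))"

definition almost_disjoint :: "'a measure \<Rightarrow> 'a set \<Rightarrow> 'a set \<Rightarrow> bool" where
  "almost_disjoint M A B \<longleftrightarrow> emeasure M (A \<inter> B) = 0"

fun tree_level :: "'a measure \<Rightarrow> ('a set \<Rightarrow> 'a set set) \<Rightarrow> nat \<Rightarrow> 'a set set" where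
  "tree_level M C 0 = {space M}"
| "tree_level M C (Suc m) = \<Union> (C ` tree_level M C m)"

definition tree_on :: "'a measure \<Rightarrow> 'a set set \<Rightarrow> ('a set \<Rightarrow> 'a set set) \<Rightarrow> bool" where
  "tree_on M T C \<longleftrightarrow>
     space M \<in> T \<and>
     (\<forall>I\<in>T. I \<in> sets M \<and> measure M I > 0) \<and>
     (\<forall>I\<in>T. finite (C I) \<and> card (C I) \<ge> 2 \<and> C I \<subseteq> T \<and> (\<forall>J\<in>C I. J \<subseteq> I)
            \<and> pairwise (almost_disjoint M) (C I) \<and> \<Union> (C I) = I) \<and>
     T = (\<Union>m. tree_level M C m) \<and>
     (\<lambda>m. Sup (measure M ` tree_level M C m)) \<longlonglongrightarrow> 0"

definition max_op :: "'a measure \<Rightarrow> 'a set set \<Rightarrow> ('a \<Rightarrow> real) \<Rightarrow> 'a \<Rightarrow> ennreal" where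
  "max_op M T \<phi> x = (SUP I \<in> {I \<in> T. x \<in> I}.
      (\<integral>\<^sup>+ y \<in> I. ennreal \<bar>\<phi> y\<bar> \<partial>M) / ennreal (measure M I))"

definition weak_norm :: "'a measure \<Rightarrow> real \<Rightarrow> ('a \<Rightarrow> real) \<Rightarrow> ennreal" where
  "weak_norm M p \<phi> = (SUP E \<in> {E \<in> sets M. measure M E > 0}.
      ennreal (measure M E powr (-1 + 1/p)) * (\<integral>\<^sup>+ y \<in> E. ennreal \<bar>\<phi> y\<bar> \<partial>M))"

definition Bellman :: "'a measure \<Rightarrow> 'a set set \<Rightarrow> real \<Rightarrow> real \<Rightarrow> real \<Rightarrow> real \<Rightarrow> real" where
  "Bellman M T p f F lam = Sup ((\<lambda>\<phi>. measure M {x \<in> space M. max_op M T \<phi> x \<ge> ennreal lam}) `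
      {\<phi>. \<phi> \<in> borel_measurable M \<and> (\<forall>x\<in>space M. \<phi> x \<ge> 0)
           \<and> (\<integral>\<^sup>+ x. ennreal (\<phi> x) \<partial>M) = ennreal f \<and> weak_norm M p \<phi> \<le> ennreal F})"

end

theory Submission
  imports Defs
begin


lemma powr_concave:
  assumes "0 < q" "q \<le> 1" shows "concave_on {0<..} (\<lambda>x::real. x powr q)"
proof (rule f''_le0_imp_concave[where f'="\<lambda>x. q * x powr (q - 1)" and f''="\<lambda>x. q * ((q - 1) * x powr (q - 1 - 1))"])
  fix x :: real assume x: "x \<in> {0<..}"
  show "DERIV (\<lambda>x. x powr q) x :> q * x powr (q - 1)"
    using x by (auto intro!: derivative_eq_intros)
  show "DERIV (\<lambda>x. q * x powr (q - 1)) x :> q * ((q - 1) * x powr (q - 1 - 1))"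
    using x by (auto intro!: derivative_eq_intros)
  show "q * ((q - 1) * x powr (q - 1 - 1)) \<le> 0"
    using assms x by (intro mult_nonneg_nonpos mult_nonpos_nonneg) auto
qed auto

lemma key_ineq:
  fixes p lam c b f F a d :: real
  assumes p: "p > 1" and c: "0 \<le> c" "c \<le> lam" and b: "0 < b" "b < 1"
    and fdef: "lam * b + c * (1 - b) = f" and fF: "f \<le> F"
    and bF: "lam * b powr (1/p) \<le> F"
    and a: "0 \<le> a" "a \<le> b" and d: "0 \<le> d" and s: "0 < a + d" "a + d \<le> 1"
  shows "(a + d) powr (-1 + 1/p) * (lam * a + c * d) \<le> F"
proof -
  define s where "s = a + d"
  have sp: "s > 0" "s \<le> 1" using s s_def by auto
  have eq: "lam * a + c * d = c * s + (lam - c) * a" unfolding s_def by (simp add: algebra_simps)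
  have q: "0 < 1 - 1/p" "1 - 1/p \<le> 1" using p by (auto simp: field_simps)
  have spp: "s powr (-1 + 1/p) * s = s powr (1/p)"
    using sp by (simp add: powr_mult_base mult.commute)
  show ?thesis
  proof (cases "s \<le> b")
    case True
    have "lam * a + c * d \<le> lam * s"
    proof -
      have "(lam - c) * a \<le> (lam - c) * s" using c d s_def by (intro mult_left_mono) auto
      thus ?thesis unfolding eq by (simp add: algebra_simps)
    qed
    hence "s powr (-1 + 1/p) * (lam * a + c * d) \<le> s powr (-1 + 1/p) * (lam * s)"
      by (simp add: mult_left_mono)
    also have "\<dots> = lam * s powr (1/p)" using spp by (simp add: algebra_simps)
    also have "\<dots> \<le> lam * b powr (1/p)"
      using True sp c p by (intro mult_left_mono powr_mono2) auto
    finally show ?thesis using bF unfolding s_def by simp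
  next
    case False
    have "lam * a + c * d \<le> c * s + (lam - c) * b"
      unfolding eq using c a by (simp add: mult_left_mono)
    also have "\<dots> \<le> F * s powr (1 - 1/p)"
    proof -
      define th where "th = (s - b) / (1 - b)"
      have th: "0 \<le> th" "th \<le> 1" using False b sp by (auto simp: th_def field_simps)
      have "th * (1 - b) = s - b" using b by (simp add: th_def)
      hence sth: "s = (1 - th) * b + th * 1" by (simp add: algebra_simps)
      have lin: "c * s + (lam - c) * b = (1 - th) * (lam * b) + th * f"
        unfolding sth fdef[symmetric] by (simp add: algebra_simps)
      have "(1 - th) * (b powr (1 - 1/p)) + th * (1 powr (1 - 1/p)) \<le> ((1 - th) * b + th * 1) powr (1 - 1/p)"
        using concave_onD[OF powr_concave[OF q], of th b 1] th b by auto
      hence conc: "(1 - th) * (b powr (1 - 1/p)) + th \<le> s powr (1 - 1/p)" using sth by simp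
      have lb: "lam * b \<le> F * b powr (1 - 1/p)"
      proof -
        have "lam * b = lam * b powr (1/p) * b powr (1 - 1/p)"
          using b by (simp add: mult.assoc powr_add[symmetric])
        also have "\<dots> \<le> F * b powr (1 - 1/p)" using bF by (simp add: mult_right_mono)
        finally show ?thesis .
      qed
      have "(1 - th) * (lam * b) + th * f \<le> (1 - th) * (F * b powr (1 - 1/p)) + th * F"
        using th lb fF by (intro add_mono mult_left_mono) auto
      also have "\<dots> = F * ((1 - th) * (b powr (1 - 1/p)) + th)" by (simp add: algebra_simps)
      also have "\<dots> \<le> F * s powr (1 - 1/p)"
        using conc fF fdef c b th by (intro mult_left_mono) (auto, smt (verit) mult_nonneg_nonneg)
      finally show ?thesis using lin by simp
    qed
    finally have "lam * a + c * d \<le> F * s powr (1 - 1/p)" .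
    hence "s powr (-1 + 1/p) * (lam * a + c * d) \<le> s powr (-1 + 1/p) * (F * s powr (1 - 1/p))"
      by (simp add: mult_left_mono)
    also have "\<dots> = F" using sp by (simp add: powr_add[symmetric])
    finally show ?thesis unfolding s_def by simp
  qed
qed



fun desc :: "('a set \<Rightarrow> 'a set set) \<Rightarrow> 'a set \<Rightarrow> nat \<Rightarrow> 'a set set" where
  "desc C K 0 = {K}"
| "desc C K (Suc n) = (\<Union>J\<in>C K. desc C J n)"

fun Vs :: "'a set set \<Rightarrow> ('a set \<Rightarrow> 'a set set) \<Rightarrow> 'a set \<Rightarrow> nat \<Rightarrow> 'a set" where
  "Vs G C K 0 = (if K \<in> G then K else {})"
| "Vs G C K (Suc n) = (if K \<in> G then K else (\<Union>J\<in>C K. Vs G C J n))"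

lemma desc_Suc': "desc C K (Suc n) = \<Union> (C ` desc C K n)"
proof (induction n arbitrary: K)
  case 0 then show ?case by simp
next
  case (Suc n)
  have "desc C K (Suc (Suc n)) = (\<Union>J\<in>C K. desc C J (Suc n))" by (simp only: desc.simps)
  also have "\<dots> = (\<Union>J\<in>C K. \<Union>(C ` desc C J n))" using Suc by simp
  also have "\<dots> = \<Union>(C ` (\<Union>J\<in>C K. desc C J n))" by auto
  also have "\<dots> = \<Union>(C ` desc C K (Suc n))" by (simp only: desc.simps)
  finally show ?case .
qed

lemma level_desc: "tree_level M C m = desc C (space M) m"
  by (induction m) (auto simp: desc_Suc' simp del: desc.simps(2))

lemma Vs_mono: "Vs G C K n \<subseteq> Vs G C K (Suc n)"
proof (induction n arbitrary: K)
  case 0 then show ?case by auto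
next
  case (Suc n)
  have "(\<Union>J\<in>C K. Vs G C J n) \<subseteq> (\<Union>J\<in>C K. Vs G C J (Suc n))"
    using Suc.IH by (rule UN_mono[OF order_refl])
  then show ?case unfolding Vs.simps(2)[of G C K n] Vs.simps(2)[of G C K "Suc n"] by auto
qed

lemma Vs_incseq: "incseq (\<lambda>n. Vs G C K n)"
  by (rule incseq_SucI) (rule Vs_mono)

locale TS = prob_space M for M :: "'a measure" +
  fixes T :: "'a set set" and C :: "'a set \<Rightarrow> 'a set set"
  assumes tree: "tree_on M T C"
begin

lemmas tr = tree[unfolded tree_on_def]
lemmas trB = conjunct1[OF conjunct2[OF tr]]
lemmas trC = conjunct1[OF conjunct2[OF conjunct2[OF tr]]]
lemma space_T: "space M \<in> T" using conjunct1[OF tr] .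
lemma T_sets: "I \<in> T \<Longrightarrow> I \<in> sets M" using trB trC by blast
lemma T_pos: "I \<in> T \<Longrightarrow> measure M I > 0" using trB trC by blast
lemma C_fin: "I \<in> T \<Longrightarrow> finite (C I)" using trB trC by blast
lemma C_T: "I \<in> T \<Longrightarrow> C I \<subseteq> T" using trB trC by blast
lemma C_sub: "I \<in> T \<Longrightarrow> J \<in> C I \<Longrightarrow> J \<subseteq> I" using trB trC by blast
lemma C_disj: "I \<in> T \<Longrightarrow> pairwise (almost_disjoint M) (C I)" using trB trC by blast
lemma C_Union: "I \<in> T \<Longrightarrow> \<Union> (C I) = I" using trB trC by blast
lemma T_levels: "T = (\<Union>m. tree_level M C m)" using conjunct1[OF conjunct2[OF conjunct2[OF conjunct2[OF tr]]]] .
lemma levels_lim: "(\<lambda>m. Sup (measure M ` tree_level M C m)) \<longlonglongrightarrow> 0"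
  using conjunct2[OF conjunct2[OF conjunct2[OF conjunct2[OF tr]]]] .

lemma level_T: "tree_level M C m \<subseteq> T" using T_levels by blast

lemma level_finite: "finite (tree_level M C m)"
proof (induction m)
  case 0 then show ?case by simp
next
  case (Suc m) then show ?case using C_fin level_T by auto
qed

lemma level_Union: "\<Union> (tree_level M C m) = space M"
proof (induction m)
  case 0 then show ?case by simp
next
  case (Suc m)
  have "\<Union> (tree_level M C (Suc m)) = (\<Union>I\<in>tree_level M C m. \<Union> (C I))" by auto
  also have "\<dots> = (\<Union>I\<in>tree_level M C m. I)"
  proof (rule SUP_cong[OF refl])
    fix I assume "I \<in> tree_level M C m" thus "\<Union>(C I) = I" using C_Union level_T by blast
  qed
  finally show ?case using Suc by simp
qed

lemma T_countable: "countable T"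
  by (subst T_levels, rule countable_UN) (auto intro: countable_finite level_finite)

lemma T_sub_space: "I \<in> T \<Longrightarrow> I \<subseteq> space M" using T_sets sets.sets_into_space by blast

lemma desc_T: "K \<in> T \<Longrightarrow> I \<in> desc C K n \<Longrightarrow> I \<in> T \<and> I \<subseteq> K"
proof (induction n arbitrary: K)
  case 0 then show ?case by simp
next
  case (Suc n)
  then obtain J where J: "J \<in> C K" "I \<in> desc C J n" by auto
  have "J \<in> T" "J \<subseteq> K" using J Suc.prems C_T C_sub by auto
  then show ?case using Suc.IH[OF \<open>J \<in> T\<close> J(2)] by auto
qed

lemma desc_Vs: "K \<in> T \<Longrightarrow> I \<in> desc C K n \<Longrightarrow> I \<in> G \<Longrightarrow> I \<subseteq> Vs G C K n"
proof (induction n arbitrary: K)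
  case 0 then show ?case by simp
next
  case (Suc n)
  show ?case
  proof (cases "K \<in> G")
    case True then show ?thesis using desc_T[OF Suc.prems(1,2)] by simp
  next
    case False
    from Suc.prems obtain J where J: "J \<in> C K" "I \<in> desc C J n" by auto
    have "J \<in> T" using J Suc.prems C_T by auto
    then have "I \<subseteq> Vs G C J n" using Suc.IH J Suc.prems(3) by auto
    then show ?thesis using False J by auto
  qed
qed

lemma T_in_level: "I \<in> T \<Longrightarrow> \<exists>m. I \<in> desc C (space M) m"
  using T_levels level_desc by blast


context
  fixes phi :: "'a \<Rightarrow> real"
  assumes phi_meas[measurable]: "phi \<in> borel_measurable M"
begin

lemma max_op_eq:
  assumes x: "x \<in> space M"
  shows "max_op M T phi x = (SUP I\<in>T. (\<integral>\<^sup>+ y \<in> I. ennreal \<bar>phi y\<bar> \<partial>M) / ennreal (measure M I) * indicator I x)"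
  unfolding max_op_def
proof (rule antisym)
  show "(SUP I\<in>{I \<in> T. x \<in> I}. (\<integral>\<^sup>+ y \<in> I. ennreal \<bar>phi y\<bar> \<partial>M) / ennreal (measure M I))
      \<le> (SUP I\<in>T. (\<integral>\<^sup>+ y \<in> I. ennreal \<bar>phi y\<bar> \<partial>M) / ennreal (measure M I) * indicator I x)"
    by (rule SUP_mono) (auto intro!: bexI)
  show "(SUP I\<in>T. (\<integral>\<^sup>+ y \<in> I. ennreal \<bar>phi y\<bar> \<partial>M) / ennreal (measure M I) * indicator I x)
      \<le> (SUP I\<in>{I \<in> T. x \<in> I}. (\<integral>\<^sup>+ y \<in> I. ennreal \<bar>phi y\<bar> \<partial>M) / ennreal (measure M I))"
  proof (rule SUP_least)
    fix I assume I: "I \<in> T"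
    show "(\<integral>\<^sup>+ y \<in> I. ennreal \<bar>phi y\<bar> \<partial>M) / ennreal (measure M I) * indicator I x
      \<le> (SUP I\<in>{I \<in> T. x \<in> I}. (\<integral>\<^sup>+ y \<in> I. ennreal \<bar>phi y\<bar> \<partial>M) / ennreal (measure M I))"
      using I by (cases "x \<in> I") (auto intro!: SUP_upper)
  qed
qed

lemma max_op_meas[measurable]: "max_op M T phi \<in> borel_measurable M"
proof -
  have "(\<lambda>x. SUP I\<in>T. (\<integral>\<^sup>+ y \<in> I. ennreal \<bar>phi y\<bar> \<partial>M) / ennreal (measure M I) * indicator I x) \<in> borel_measurable M"
    using T_countable T_sets by (intro borel_measurable_SUP) auto
  then show ?thesis by (rule measurable_cong[THEN iffD1, rotated]) (simp add: max_op_eq)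
qed

lemma S_sets: "{x \<in> space M. max_op M T phi x \<ge> ennreal lam} \<in> sets M"
  by measurable


lemma Vs_prop:
  fixes t :: real
  defines "G \<equiv> {I \<in> T. ennreal t * emeasure M I \<le> (\<integral>\<^sup>+ y \<in> I. ennreal \<bar>phi y\<bar> \<partial>M)}"
  assumes K: "K \<in> T"
  shows "Vs G C K n \<in> sets M \<and> Vs G C K n \<subseteq> K \<and>
    ennreal t * emeasure M (Vs G C K n) \<le> (\<integral>\<^sup>+ y \<in> Vs G C K n. ennreal \<bar>phi y\<bar> \<partial>M)"
  using K
proof (induction n arbitrary: K)
  case 0 then show ?case using T_sets by (auto simp: G_def)
next
  case (Suc n)
  show ?case
  proof (cases "K \<in> G")
    case True then show ?thesis using T_sets by (auto simp: G_def)
  next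
    case False
    define A where "A J = Vs G C J n" for J
    have V: "Vs G C K (Suc n) = (\<Union>J\<in>C K. A J)" using False by (simp add: A_def)
    have fin: "finite (C K)" using C_fin Suc.prems by auto
    have JT: "J \<in> T" if "J \<in> C K" for J using C_T Suc.prems that by auto
    have IH: "A J \<in> sets M" "A J \<subseteq> J"
      "ennreal t * emeasure M (A J) \<le> (\<integral>\<^sup>+ y \<in> A J. ennreal \<bar>phi y\<bar> \<partial>M)"
      if "J \<in> C K" for J using Suc.IH[OF JT[OF that]] by (auto simp: A_def)
    have Asets: "(\<Union>J\<in>C K. A J) \<in> sets M" using fin IH by auto
    have Asub: "(\<Union>J\<in>C K. A J) \<subseteq> K" using IH C_sub Suc.prems by blast
    have AE: "AE x in M. \<forall>JJ\<in>C K \<times> C K. fst JJ \<noteq> snd JJ \<longrightarrow> x \<notin> fst JJ \<inter> snd JJ"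
    proof (rule AE_finite_allI)
      show "finite (C K \<times> C K)" using fin by auto
      fix JJ assume JJ: "JJ \<in> C K \<times> C K"
      show "AE x in M. fst JJ \<noteq> snd JJ \<longrightarrow> x \<notin> fst JJ \<inter> snd JJ"
      proof (cases "fst JJ = snd JJ")
        case True then show ?thesis by simp
      next
        case False
        have "almost_disjoint M (fst JJ) (snd JJ)"
        proof -
          have "fst JJ \<in> C K" "snd JJ \<in> C K" using JJ by auto
          then show ?thesis using C_disj[OF Suc.prems] False unfolding pairwise_def by blast
        qed
        then have "fst JJ \<inter> snd JJ \<in> null_sets M"
          using JJ T_sets JT by (auto simp: almost_disjoint_def intro!: null_setsI)
        then have "AE x in M. x \<notin> fst JJ \<inter> snd JJ" by (rule AE_not_in)
        then show ?thesis by (rule eventually_mono) simp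
      qed
    qed
    have "ennreal t * emeasure M (\<Union>J\<in>C K. A J) \<le> ennreal t * (\<Sum>J\<in>C K. emeasure M (A J))"
      using fin IH by (intro mult_left_mono emeasure_subadditive_finite) auto
    also have "\<dots> = (\<Sum>J\<in>C K. ennreal t * emeasure M (A J))" by (simp add: sum_distrib_left)
    also have "\<dots> \<le> (\<Sum>J\<in>C K. (\<integral>\<^sup>+ y \<in> A J. ennreal \<bar>phi y\<bar> \<partial>M))"
      using IH by (intro sum_mono) auto
    also have "\<dots> = (\<integral>\<^sup>+ y. (\<Sum>J\<in>C K. ennreal \<bar>phi y\<bar> * indicator (A J) y) \<partial>M)"
      using IH by (subst nn_integral_sum) auto
    also have "\<dots> \<le> (\<integral>\<^sup>+ y \<in> (\<Union>J\<in>C K. A J). ennreal \<bar>phi y\<bar> \<partial>M)"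
    proof (rule nn_integral_mono_AE)
      show "AE x in M. (\<Sum>J\<in>C K. ennreal \<bar>phi x\<bar> * indicator (A J) x)
          \<le> ennreal \<bar>phi x\<bar> * indicator (\<Union>J\<in>C K. A J) x"
        using AE
      proof (rule eventually_mono)
        fix x assume H: "\<forall>JJ\<in>C K \<times> C K. fst JJ \<noteq> snd JJ \<longrightarrow> x \<notin> fst JJ \<inter> snd JJ"
        show "(\<Sum>J\<in>C K. ennreal \<bar>phi x\<bar> * indicator (A J) x)
          \<le> ennreal \<bar>phi x\<bar> * indicator (\<Union>J\<in>C K. A J) x"
        proof (cases "\<exists>J0\<in>C K. x \<in> A J0")
          case True
          then obtain J0 where J0: "J0 \<in> C K" "x \<in> A J0" by blast
          have z: "ennreal \<bar>phi x\<bar> * indicator (A J) x = 0" if "J \<in> C K - {J0}" for J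
          proof -
            have "x \<notin> A J"
            proof
              assume "x \<in> A J"
              then have "x \<in> J \<inter> J0" using IH that J0 by blast
              then show False using H[rule_format, of "(J, J0)"] that J0 by auto
            qed
            then show ?thesis by simp
          qed
          have "(\<Sum>J\<in>C K. ennreal \<bar>phi x\<bar> * indicator (A J) x)
             = ennreal \<bar>phi x\<bar> * indicator (A J0) x + (\<Sum>J\<in>C K - {J0}. ennreal \<bar>phi x\<bar> * indicator (A J) x)"
            using fin J0(1) by (rule sum.remove)
          also have "\<dots> = ennreal \<bar>phi x\<bar>" using sum.neutral[of "C K - {J0}", OF ballI[OF z]] J0 by simp
          moreover have "x \<in> (\<Union>J\<in>C K. A J)" using J0 by blast
          ultimately show ?thesis by simp
        next
          case False then show ?thesis by simp
        qed
      qed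
    qed
    finally show ?thesis using V Asets Asub by simp
  qed
qed


lemma upper_V:
  fixes f F p t :: real and V :: "'a set"
  assumes nn: "\<forall>x\<in>space M. phi x \<ge> 0"
    and int: "(\<integral>\<^sup>+ x. ennreal (phi x) \<partial>M) = ennreal f"
    and wn: "weak_norm M p phi \<le> ennreal F"
    and p: "p > 1" and f: "f \<ge> 0" and F: "F \<ge> 0" and t: "t > 0"
    and V: "V \<in> sets M"
    and ineq: "ennreal t * emeasure M V \<le> (\<integral>\<^sup>+ y \<in> V. ennreal \<bar>phi y\<bar> \<partial>M)"
  shows "measure M V \<le> f / t" "measure M V \<le> F powr p / t powr p"
proof -
  have "(\<integral>\<^sup>+ y \<in> V. ennreal \<bar>phi y\<bar> \<partial>M) \<le> (\<integral>\<^sup>+ x. ennreal (phi x) \<partial>M)"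
    using nn by (intro nn_integral_mono) (auto simp: indicator_def)
  with ineq int have "ennreal (t * measure M V) \<le> ennreal f"
    using t by (simp add: emeasure_eq_measure ennreal_mult)
  then have "t * measure M V \<le> f" using f by simp
  then show "measure M V \<le> f / t" using t by (simp add: field_simps)
  show "measure M V \<le> F powr p / t powr p"
  proof (cases "measure M V = 0")
    case True then show ?thesis using F t by simp
  next
    case False
    then have mV: "measure M V > 0" using measure_nonneg[of M V] by linarith
    have w1: "ennreal (measure M V powr (-1 + 1/p)) * (\<integral>\<^sup>+ y \<in> V. ennreal \<bar>phi y\<bar> \<partial>M) \<le> weak_norm M p phi"
      unfolding weak_norm_def using V mV by (intro SUP_upper) auto
    have w2: "ennreal (measure M V powr (-1 + 1/p)) * ennreal (t * measure M V)
        \<le> ennreal (measure M V powr (-1 + 1/p)) * (\<integral>\<^sup>+ y \<in> V. ennreal \<bar>phi y\<bar> \<partial>M)"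
      using ineq t by (intro mult_left_mono) (auto simp: emeasure_eq_measure ennreal_mult)
    have "ennreal (measure M V powr (-1 + 1/p) * (t * measure M V)) \<le> ennreal F"
    proof -
      have "ennreal (measure M V powr (-1 + 1/p) * (t * measure M V)) =
          ennreal (measure M V powr (-1 + 1/p)) * ennreal (t * measure M V)"
        using t mV by (intro ennreal_mult) auto
      then show ?thesis using w1 w2 wn by (metis order_trans)
    qed
    then have "measure M V powr (-1 + 1/p) * (t * measure M V) \<le> F" using F by simp
    moreover have "measure M V powr (-1 + 1/p) * (t * measure M V) = t * measure M V powr (1/p)"
      using mV by (simp add: powr_mult_base mult.commute mult.left_commute)
    ultimately have "measure M V powr (1/p) \<le> F / t" using t by (simp add: field_simps)
    then have "(measure M V powr (1/p)) powr p \<le> (F / t) powr p"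
      using p by (intro powr_mono2) auto
    then show ?thesis using p mV F t by (simp add: powr_powr powr_divide)
  qed
qed

lemma upper_t:
  fixes f F p t lam :: real
  assumes nn: "\<forall>x\<in>space M. phi x \<ge> 0"
    and int: "(\<integral>\<^sup>+ x. ennreal (phi x) \<partial>M) = ennreal f"
    and wn: "weak_norm M p phi \<le> ennreal F"
    and p: "p > 1" and f: "f \<ge> 0" and F: "F \<ge> 0" and t: "t > 0" "t < lam"
  shows "measure M {x \<in> space M. max_op M T phi x \<ge> ennreal lam} \<le> f / t \<and>
         measure M {x \<in> space M. max_op M T phi x \<ge> ennreal lam} \<le> F powr p / t powr p"
proof -
  define G where "G = {I \<in> T. ennreal t * emeasure M I \<le> (\<integral>\<^sup>+ y \<in> I. ennreal \<bar>phi y\<bar> \<partial>M)}"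
  define V where "V n = Vs G C (space M) n" for n
  have VP: "V n \<in> sets M" "ennreal t * emeasure M (V n) \<le> (\<integral>\<^sup>+ y \<in> V n. ennreal \<bar>phi y\<bar> \<partial>M)" for n
    using Vs_prop[OF space_T, of t n] unfolding V_def G_def by auto
  have inc: "incseq V" unfolding V_def by (rule Vs_incseq)
  define S where "S = {x \<in> space M. max_op M T phi x \<ge> ennreal lam}"
  have Ssub: "S \<subseteq> (\<Union>n. V n)"
  proof
    fix x assume "x \<in> S"
    then have x: "x \<in> space M" "ennreal lam \<le> max_op M T phi x" by (auto simp: S_def)
    have "ennreal t < ennreal lam" using t by (simp add: ennreal_lessI)
    with x have "ennreal t < (SUP I\<in>{I \<in> T. x \<in> I}. (\<integral>\<^sup>+ y \<in> I. ennreal \<bar>phi y\<bar> \<partial>M) / ennreal (measure M I))"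
      unfolding max_op_def by simp
    then obtain I where I: "I \<in> T" "x \<in> I"
      and lt: "ennreal t < (\<integral>\<^sup>+ y \<in> I. ennreal \<bar>phi y\<bar> \<partial>M) / ennreal (measure M I)"
      by (auto simp: less_SUP_iff)
    have mI: "measure M I > 0" using T_pos I by auto
    have "ennreal t * ennreal (measure M I) < (\<integral>\<^sup>+ y \<in> I. ennreal \<bar>phi y\<bar> \<partial>M) / ennreal (measure M I) * ennreal (measure M I)"
      using lt mI by (intro ennreal_mult_strict_right_mono) auto
    also have "\<dots> = (\<integral>\<^sup>+ y \<in> I. ennreal \<bar>phi y\<bar> \<partial>M)"
      using mI by (simp add: ennreal_divide_times)
    finally have "I \<in> G" using I by (auto simp: G_def emeasure_eq_measure)
    obtain m where "I \<in> desc C (space M) m" using T_in_level I by blast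
    then have "I \<subseteq> V m" unfolding V_def using desc_Vs[OF space_T] \<open>I \<in> G\<close> by blast
    then show "x \<in> (\<Union>n. V n)" using I by blast
  qed
  have US: "(\<Union>n. V n) \<in> sets M" using VP by auto
  have lim: "(\<lambda>n. measure M (V n)) \<longlonglongrightarrow> measure M (\<Union>n. V n)"
    using VP inc by (intro finite_Lim_measure_incseq) auto
  have b1: "measure M (\<Union>n. V n) \<le> f / t"
    using lim by (rule LIMSEQ_le_const2) (use upper_V[OF nn int wn p f F t(1) VP] in auto)
  have b2: "measure M (\<Union>n. V n) \<le> F powr p / t powr p"
    using lim by (rule LIMSEQ_le_const2) (use upper_V[OF nn int wn p f F t(1) VP] in auto)
  have "measure M S \<le> measure M (\<Union>n. V n)" using Ssub US by (intro finite_measure_mono)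
  then show ?thesis using b1 b2 unfolding S_def by linarith
qed

lemma upper:
  fixes f F p lam :: real
  assumes nn: "\<forall>x\<in>space M. phi x \<ge> 0"
    and int: "(\<integral>\<^sup>+ x. ennreal (phi x) \<partial>M) = ennreal f"
    and wn: "weak_norm M p phi \<le> ennreal F"
    and p: "p > 1" and f: "f \<ge> 0" and F: "F \<ge> 0" and lam: "lam > 0"
  shows "measure M {x \<in> space M. max_op M T phi x \<ge> ennreal lam} \<le> min 1 (min (f / lam) (F powr p / lam powr p))"
proof -
  define m where "m = measure M {x \<in> space M. max_op M T phi x \<ge> ennreal lam}"
  have ev: "eventually (\<lambda>t. t \<in> {0<..<lam}) (at_left lam)" using lam by (rule eventually_at_left_real)
  have 1: "m \<le> 1" unfolding m_def by (rule prob_le_1)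
  have 2: "m \<le> f / lam"
  proof (rule tendsto_le[of "at_left lam"])
    show "((\<lambda>t. f / t) \<longlongrightarrow> f / lam) (at_left lam)" using lam by (auto intro!: tendsto_eq_intros)
    show "eventually (\<lambda>t. m \<le> f / t) (at_left lam)"
      using ev by (rule eventually_mono) (use upper_t[OF nn int wn p f F] in \<open>auto simp: m_def\<close>)
  qed auto
  have 3: "m \<le> F powr p / lam powr p"
  proof (rule tendsto_le[of "at_left lam"])
    show "((\<lambda>t. F powr p / t powr p) \<longlongrightarrow> F powr p / lam powr p) (at_left lam)"
      using lam by (auto intro!: tendsto_eq_intros)
    show "eventually (\<lambda>t. m \<le> F powr p / t powr p) (at_left lam)"
      using ev by (rule eventually_mono) (use upper_t[OF nn int wn p f F] in \<open>auto simp: m_def\<close>)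
  qed auto
  show ?thesis using 1 2 3 unfolding m_def by simp
qed

end
end


lemma step_seq:
  fixes s :: "nat \<Rightarrow> real"
  assumes "s 0 \<le> \<beta>" "\<forall>i<n. s (Suc i) < s i + \<epsilon>" "\<beta> < s n"
  shows "\<exists>i<n. \<beta> - \<epsilon> < s i \<and> s i \<le> \<beta>"
  using assms
proof (induction n)
  case 0 then show ?case by simp
next
  case (Suc n)
  show ?case
  proof (cases "s n \<le> \<beta>")
    case True
    then show ?thesis using Suc.prems(2,3) by (intro exI[of _ n]) auto
  next
    case False
    then obtain i where "i < n" "\<beta> - \<epsilon> < s i \<and> s i \<le> \<beta>" using Suc by auto
    then show ?thesis by (intro exI[of _ i]) auto
  qed
qed

context TS
begin

lemma approx_set:
  assumes "0 < \<beta>" "\<beta> < 1" "0 < \<epsilon>"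
  shows "\<exists>L. L \<subseteq> T \<and> finite L \<and> measure M (\<Union>L) \<le> \<beta> \<and> \<beta> - \<epsilon> < measure M (\<Union>L)"
proof -
  have "eventually (\<lambda>m. Sup (measure M ` tree_level M C m) < \<epsilon>) sequentially"
    using levels_lim assms(3) by (rule order_tendstoD(2))
  then obtain m where m: "Sup (measure M ` tree_level M C m) < \<epsilon>"
    by (auto simp: eventually_sequentially)
  define L where "L = tree_level M C m"
  have Lsmall: "measure M J < \<epsilon>" if "J \<in> L" for J
  proof -
    have "measure M J \<le> Sup (measure M ` L)"
      using that level_finite unfolding L_def by (intro cSup_upper bdd_above_finite) auto
    then show ?thesis using m L_def by simp
  qed
  obtain xs where xs: "set xs = L" using level_finite finite_list unfolding L_def by blast
  define s where "s i = measure M (\<Union>(set (take i xs)))" for i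
  have LT: "L \<subseteq> T" unfolding L_def by (rule level_T)
  have sets_take: "\<Union>(set (take i xs)) \<in> sets M" for i
  proof -
    have h1: "set (take i xs) \<subseteq> T" using set_take_subset[of i xs] xs LT by simp
    have "set (take i xs) \<subseteq> sets M"
    proof
      fix J assume "J \<in> set (take i xs)" then show "J \<in> sets M" using h1 by (intro T_sets) blast
    qed
    then show ?thesis by (rule sets.finite_Union[OF finite_set])
  qed
  have s0: "s 0 \<le> \<beta>" using assms by (simp add: s_def)
  have "s (length xs) = 1" unfolding s_def using xs level_Union[of m] prob_space by (simp add: L_def)
  then have sn: "\<beta> < s (length xs)" using assms by simp
  have step: "\<forall>i<length xs. s (Suc i) < s i + \<epsilon>"
  proof (intro allI impI)
    fix i assume i: "i < length xs"
    have "\<Union>(set (take (Suc i) xs)) = \<Union>(set (take i xs)) \<union> xs ! i"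
      using i by (simp add: take_Suc_conv_app_nth Un_commute)
    have xi: "xs ! i \<in> L" using i xs nth_mem by blast
    have "xs ! i \<in> sets M" using T_sets[OF subsetD[OF LT xi]] .
    then have "measure M (\<Union>(set (take i xs)) \<union> xs ! i) \<le> s i + measure M (xs ! i)"
      unfolding s_def by (rule measure_Un_le[OF sets_take[of i]])
    with \<open>\<Union>(set (take (Suc i) xs)) = _\<close> have "s (Suc i) \<le> s i + measure M (xs ! i)"
      unfolding s_def by simp
    then show "s (Suc i) < s i + \<epsilon>" using Lsmall[OF xi] by simp
  qed
  obtain i where "i < length xs" and si: "\<beta> - \<epsilon> < s i \<and> s i \<le> \<beta>" using step_seq[OF s0 step sn] by blast
  have "set (take i xs) \<subseteq> T" using set_take_subset[of i xs] xs LT by simp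
  then show ?thesis using si unfolding s_def by (intro exI[of _ "set (take i xs)"] conjI) simp_all
qed


lemma avg_max_op:
  assumes "I \<in> T" "x \<in> I" "(\<integral>\<^sup>+ y \<in> I. ennreal \<bar>phi y\<bar> \<partial>M) = ennreal (c * measure M I)" "c \<ge> 0"
  shows "ennreal c \<le> max_op M T phi x"
proof -
  have mI: "measure M I > 0" using T_pos assms(1) by simp
  have "ennreal c = (\<integral>\<^sup>+ y \<in> I. ennreal \<bar>phi y\<bar> \<partial>M) / ennreal (measure M I)"
    using mI assms(3,4) by (simp add: divide_ennreal)
  also have "\<dots> \<le> max_op M T phi x" unfolding max_op_def using assms(1,2) by (intro SUP_upper) simp
  finally show ?thesis .
qed

lemma lower_construct:
  fixes p f F lam b :: real
  assumes p: "p > 1" and f: "0 < f" "f \<le> F" "f < lam"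
    and beta: "b \<le> f / lam" "b \<le> F powr p / lam powr p" and b: "0 < b"
    and L: "L \<subseteq> T" "finite L" and bE: "measure M (\<Union>L) = b"
  shows "\<exists>phi. phi \<in> borel_measurable M \<and> (\<forall>x\<in>space M. phi x \<ge> 0) \<and>
    (\<integral>\<^sup>+ x. ennreal (phi x) \<partial>M) = ennreal f \<and> weak_norm M p phi \<le> ennreal F \<and>
    b \<le> measure M {x \<in> space M. max_op M T phi x \<ge> ennreal lam}"
proof -
  define E where "E = \<Union>L"
  have LS: "L \<subseteq> sets M"
  proof
    fix J assume "J \<in> L" then show "J \<in> sets M" by (intro T_sets) (use L in blast)
  qed
  have E[measurable]: "E \<in> sets M" unfolding E_def by (rule sets.finite_Union[OF L(2) LS])
  have lam: "lam > 0" using f by simp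
  have lb: "lam * b \<le> f" using beta(1) lam by (simp add: le_divide_eq mult.commute)
  have b1: "b < 1" using lb f lam by (smt (verit) mult_le_cancel_left1)
  define c where "c = (f - lam * b) / (1 - b)"
  have c0: "0 \<le> c" using lb b1 by (simp add: c_def)
  have clam: "c \<le> lam" using b1 f by (simp add: c_def divide_le_eq algebra_simps)
  have fdef: "lam * b + c * (1 - b) = f" using b1 by (simp add: c_def)
  have bF: "lam * b powr (1/p) \<le> F"
  proof -
    have "b powr (1/p) \<le> (F powr p / lam powr p) powr (1/p)"
      using beta(2) b p by (intro powr_mono2) auto
    also have "\<dots> = F / lam" using p lam f by (simp add: powr_divide[symmetric] powr_powr)
    finally show ?thesis using lam by (simp add: field_simps)
  qed
  define phi where "phi x = (if x \<in> E then lam else c)" for x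
  have phi_meas[measurable]: "phi \<in> borel_measurable M" unfolding phi_def by measurable
  have phi_nn: "\<forall>x\<in>space M. phi x \<ge> 0" using lam c0 by (simp add: phi_def)
  have intA: "(\<integral>\<^sup>+ y \<in> A. ennreal \<bar>phi y\<bar> \<partial>M) = ennreal (lam * measure M (A \<inter> E) + c * measure M (A - E))"
    if A[measurable]: "A \<in> sets M" for A
  proof -
    have "(\<integral>\<^sup>+ y \<in> A. ennreal \<bar>phi y\<bar> \<partial>M) =
        (\<integral>\<^sup>+ y. ennreal lam * indicator (A \<inter> E) y + ennreal c * indicator (A - E) y \<partial>M)"
      using lam c0 by (intro nn_integral_cong) (auto simp: phi_def indicator_def)
    also have "\<dots> = ennreal lam * emeasure M (A \<inter> E) + ennreal c * emeasure M (A - E)"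
      by (simp add: nn_integral_add nn_integral_cmult_indicator)
    also have "\<dots> = ennreal (lam * measure M (A \<inter> E) + c * measure M (A - E))"
      using lam c0 by (simp add: emeasure_eq_measure ennreal_mult ennreal_plus[symmetric])
    finally show ?thesis .
  qed
  have int: "(\<integral>\<^sup>+ x. ennreal (phi x) \<partial>M) = ennreal f"
  proof -
    have "(\<integral>\<^sup>+ x. ennreal (phi x) \<partial>M) = (\<integral>\<^sup>+ y \<in> space M. ennreal \<bar>phi y\<bar> \<partial>M)"
      using phi_nn by (intro nn_integral_cong) auto
    also have "\<dots> = ennreal (lam * measure M (space M \<inter> E) + c * measure M (space M - E))"
      by (rule intA) simp
    also have "space M \<inter> E = E" using E sets.sets_into_space by blast
    also have "measure M (space M - E) = 1 - b" using prob_compl[OF E] bE by (simp add: E_def)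
    finally show ?thesis using fdef bE by (simp add: E_def)
  qed
  have wn: "weak_norm M p phi \<le> ennreal F"
    unfolding weak_norm_def
  proof (rule SUP_least)
    fix A assume "A \<in> {E \<in> sets M. measure M E > 0}"
    then have A[measurable]: "A \<in> sets M" and mA: "measure M A > 0" by auto
    define a where "a = measure M (A \<inter> E)"
    define d where "d = measure M (A - E)"
    have ad: "measure M A = a + d"
    proof -
      have "A = (A \<inter> E) \<union> (A - E)" by blast
      then have "measure M A = measure M ((A \<inter> E) \<union> (A - E))" by simp
      also have "\<dots> = a + d" unfolding a_def d_def by (rule finite_measure_Union) auto
      finally show ?thesis .
    qed
    have "measure M (A \<inter> E) \<le> measure M E" using E by (intro finite_measure_mono) auto
    then have a0: "0 \<le> a" "a \<le> b" using bE by (auto simp: a_def E_def)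
    have d0: "0 \<le> d" by (simp add: d_def)
    have le1: "a + d \<le> 1" using ad prob_le_1[of A] by simp
    have K: "(a + d) powr (-1 + 1/p) * (lam * a + c * d) \<le> F"
      using key_ineq[OF p c0 clam b b1 fdef f(2) bF a0 d0] mA ad le1 by simp
    have "ennreal (measure M A powr (-1 + 1/p)) * (\<integral>\<^sup>+ y \<in> A. ennreal \<bar>phi y\<bar> \<partial>M)
        = ennreal ((a + d) powr (-1 + 1/p) * (lam * a + c * d))"
      using intA[OF A] ad lam c0 a0 d0 unfolding a_def d_def by (simp add: ennreal_mult)
    also have "\<dots> \<le> ennreal F" using K by (rule ennreal_leI)
    finally show "ennreal (measure M A powr (-1 + 1/p)) * (\<integral>\<^sup>+ y \<in> A. ennreal \<bar>phi y\<bar> \<partial>M) \<le> ennreal F" .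
  qed
  have Ssub: "E \<subseteq> {x \<in> space M. max_op M T phi x \<ge> ennreal lam}"
  proof
    fix x assume "x \<in> E"
    then obtain J where J: "J \<in> L" "x \<in> J" by (auto simp: E_def)
    have JT: "J \<in> T" using J L by blast
    have JE: "J \<subseteq> E" using J by (auto simp: E_def)
    have JS[measurable]: "J \<in> sets M" using T_sets[OF JT] .
    have "(\<integral>\<^sup>+ y \<in> J. ennreal \<bar>phi y\<bar> \<partial>M) = ennreal (lam * measure M J)"
    proof -
      have e1: "J - E = {}" and e2: "J \<inter> E = J" using JE by auto
      show ?thesis using intA[OF JS] unfolding e1 e2 by simp
    qed
    then have "ennreal lam \<le> max_op M T phi x" using avg_max_op[OF JT J(2)] lam by simp
    moreover have "x \<in> space M" using JE JS sets.sets_into_space J by blast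
    ultimately show "x \<in> {x \<in> space M. max_op M T phi x \<ge> ennreal lam}" by simp
  qed
  have "b \<le> measure M {x \<in> space M. max_op M T phi x \<ge> ennreal lam}"
    using finite_measure_mono[OF Ssub S_sets[OF phi_meas]] bE by (simp add: E_def)
  then show ?thesis using phi_meas phi_nn int wn by blast
qed

end

theorem theorem3p1:
  fixes M :: "'a measure" and T :: "'a set set" and C :: "'a set \<Rightarrow> 'a set set"
    and p f F lam :: real
  assumes "prob_space M" and "nonatomic M" and "tree_on M T C"
    and "p > 1" and "0 < f" and "f \<le> F" and "lam > 0"
  shows "Bellman M T p f F lam = min 1 (min (f / lam) (F powr p / lam powr p))"
proof -
  interpret TS M T C unfolding TS_def TS_axioms_def using assms(1,3) by simp
  have p: "p > 1" and f: "0 < f" "f \<le> F" and lam: "lam > 0" using assms by auto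
  define \<Phi> where "\<Phi> = {\<phi>. \<phi> \<in> borel_measurable M \<and> (\<forall>x\<in>space M. \<phi> x \<ge> 0)
           \<and> (\<integral>\<^sup>+ x. ennreal (\<phi> x) \<partial>M) = ennreal f \<and> weak_norm M p \<phi> \<le> ennreal F}"
  define h where "h \<phi> = measure M {x \<in> space M. max_op M T \<phi> x \<ge> ennreal lam}" for \<phi>
  define v where "v = min 1 (min (f / lam) (F powr p / lam powr p))"
  have B: "Bellman M T p f F lam = Sup (h ` \<Phi>)" unfolding Bellman_def \<Phi>_def h_def ..
  define \<phi>0 where "\<phi>0 = (\<lambda>x::'a. f)"
  have c_int: "(\<integral>\<^sup>+ y \<in> A. ennreal \<bar>\<phi>0 y\<bar> \<partial>M) = ennreal (f * measure M A)" if "A \<in> sets M" for A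
    using that f by (simp add: \<phi>0_def nn_integral_cmult_indicator emeasure_eq_measure ennreal_mult)
  have phi0: "\<phi>0 \<in> \<Phi>"
    unfolding \<Phi>_def
  proof (intro CollectI conjI)
    show "\<phi>0 \<in> borel_measurable M" by (simp add: \<phi>0_def)
    show "\<forall>x\<in>space M. 0 \<le> \<phi>0 x" using f by (simp add: \<phi>0_def)
    show "(\<integral>\<^sup>+ x. ennreal (\<phi>0 x) \<partial>M) = ennreal f" using f by (simp add: \<phi>0_def emeasure_space_1)
    show "weak_norm M p \<phi>0 \<le> ennreal F"
      unfolding weak_norm_def
    proof (rule SUP_least)
      fix A assume "A \<in> {E \<in> sets M. measure M E > 0}"
      then have A: "A \<in> sets M" and mA: "measure M A > 0" by auto
      have "ennreal (measure M A powr (-1 + 1/p)) * (\<integral>\<^sup>+ y \<in> A. ennreal \<bar>\<phi>0 y\<bar> \<partial>M)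
          = ennreal (measure M A powr (-1 + 1/p) * (f * measure M A))"
        using c_int[OF A] f mA by (simp add: ennreal_mult)
      also have "measure M A powr (-1 + 1/p) * (f * measure M A) = f * measure M A powr (1/p)"
        using mA by (simp add: powr_mult_base mult.commute mult.left_commute)
      also have "f * measure M A powr (1/p) \<le> F"
      proof -
        have "measure M A powr (1/p) \<le> 1" using p mA prob_le_1[of A] by (intro powr_le1) auto
        then show ?thesis using f by (smt (verit) mult_left_mono mult_cancel_left1)
      qed
      finally show "ennreal (measure M A powr (-1 + 1/p)) * (\<integral>\<^sup>+ y \<in> A. ennreal \<bar>\<phi>0 y\<bar> \<partial>M) \<le> ennreal F"
        by (simp add: ennreal_leI)
    qed
  qed
  have phi0_max: "ennreal f \<le> max_op M T \<phi>0 x" if "x \<in> space M" for x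
    using avg_max_op[OF space_T that c_int[OF sets.top]] f by simp
  have ub: "h \<phi> \<le> v" if "\<phi> \<in> \<Phi>" for \<phi>
    using that upper[of \<phi> f p F lam] f p lam unfolding \<Phi>_def h_def v_def by auto
  have "Sup (h ` \<Phi>) = v"
  proof (rule cSup_eq_non_empty)
    show "h ` \<Phi> \<noteq> {}" using phi0 by blast
    show "\<And>x. x \<in> h ` \<Phi> \<Longrightarrow> x \<le> v" using ub by blast
    fix y assume Y: "\<And>x. x \<in> h ` \<Phi> \<Longrightarrow> x \<le> y"
    show "v \<le> y"
    proof (cases "lam \<le> f")
      case True
      have "lam powr p \<le> F powr p" using True f lam p by (intro powr_mono2) auto
      then have "1 \<le> F powr p / lam powr p" using lam by simp
      moreover have "1 \<le> f / lam" using True lam by simp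
      ultimately have v1: "v = 1" unfolding v_def by simp
      have "{x \<in> space M. max_op M T \<phi>0 x \<ge> ennreal lam} = space M"
        using phi0_max True by (auto intro: order_trans[OF ennreal_leI])
      then have "h \<phi>0 = 1" unfolding h_def by (simp add: prob_space)
      then show ?thesis using Y[of "h \<phi>0"] phi0 v1 by auto
    next
      case False
      define \<beta> where "\<beta> = min (f / lam) (F powr p / lam powr p)"
      have fl: "f / lam < 1" using False lam by simp
      have vb: "v = \<beta>" unfolding v_def \<beta>_def using fl by simp
      have b0: "0 < \<beta>" using f lam by (simp add: \<beta>_def)
      have b1: "\<beta> < 1" using fl by (simp add: \<beta>_def)
      show ?thesis
      proof (rule ccontr)
        assume "\<not> v \<le> y"
        then have yv: "y < \<beta>" using vb by simp
        define \<epsilon> where "\<epsilon> = min (\<beta> - y) (\<beta> / 2)"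
        have e0: "0 < \<epsilon>" using yv b0 by (simp add: \<epsilon>_def)
        obtain L where L: "L \<subseteq> T" "finite L" "measure M (\<Union>L) \<le> \<beta>" "\<beta> - \<epsilon> < measure M (\<Union>L)"
          using approx_set[OF b0 b1 e0] by blast
        define b where "b = measure M (\<Union>L)"
        have bpos: "0 < b" using L(4) b0 unfolding b_def \<epsilon>_def by linarith
        have "b \<le> f / lam" "b \<le> F powr p / lam powr p" using L(3) by (auto simp: b_def \<beta>_def)
        then obtain \<phi> where "\<phi> \<in> \<Phi>" "b \<le> h \<phi>"
          using lower_construct[OF p f(1,2) _ _ _ bpos L(1,2), of lam] False b_def
          unfolding \<Phi>_def h_def by force
        then have "b \<le> y" using Y by force
        moreover have "y \<le> \<beta> - \<epsilon>" by (simp add: \<epsilon>_def)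
        ultimately show False using L(4) b_def by simp
      qed
    qed
  qed
  then show ?thesis using B v_def by simp
qed


end
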